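(* Let $(X,d)$ be a reflexive Busemann convex geodesic metric space and let $A,B\subseteq X$ be nonempty, closed and convex, with $A$ bounded. Let $T:A\cup B\to A\cup B$ be a noncyclic relatively nonexpansive mapping, and suppose the pair $(A,B)$ has proximal normal structure. Then there exists $(x,y)\in A\times B$ such that $x=Tx$, $y=Ty$ and $d(x,y)=\operatorname{dist}(A,B)$.
   Context: $\operatorname{dist}(A,B)=\inf\{d(x,y):x\in A,y\in B\}$, $\delta(x,A)=\sup\{d(x,y):y\in A\}$, $\delta(A,B)=\sup\{d(x,y):x\in A,y\in B\}$. A geodesic space is one in which any two points are joined by a geodesic segment; a subset is convex if it contains every geodesic segment joining two of its points. $X$ is Busemann convex if for any geodesics $c_1:[0,l_1]\to X$, $c_2:[0,l_2]\to X$, $d(c_1(tl_1),c_2(tl_2))\le (1-t)d(c_1(0),c_2(0))+t\,d(c_1(l_1),c_2(l_2))$ for all $t\in[0,1]$. $X$ is reflexive if every decreasing chain of nonempty closed convex bounded subsets has nonempty intersection. $T$ is relatively nonexpansive if $d(Tx,Ty)\le d(x,y)$ for all $x\in A$, $y\in B$; it is noncyclic if $T(A)\subseteq A$ and $T(B)\subseteq B$. A pair $(H_1,H_2)$ is proximal if for every $(a,b)\in H_1\times H_2$ there is $(a',b')\in H_1\times H_2$ with $d(a,b')=d(a',b)=\operatorname{dist}(H_1,H_2)$. A convex pair $(K_1,K_2)$ has proximal normal structure if for every closed bounded convex proximal pair $(H_1,H_2)$ with $H_1\subseteq K_1$, $H_2\subseteq K_2$, $\operatorname{dist}(H_1,H_2)=\operatorname{dist}(K_1,K_2)$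 and $\delta(H_1,H_2)>\operatorname{dist}(H_1,H_2)$, there exists $(x_1,x_2)\in H_1\times H_2$ with $\delta(x_1,H_2)<\delta(H_1,H_2)$ and $\delta(x_2,H_1)<\delta(H_1,H_2)$. *)

theory Defs
  imports "HOL-Analysis.Analysis"
begin

definition geodesic_seg :: "(real \<Rightarrow> 'a::metric_space) \<Rightarrow> real \<Rightarrow> 'a \<Rightarrow> 'a \<Rightarrow> bool" where
  "geodesic_seg c l x y \<longleftrightarrow> 0 \<le> l \<and> c 0 = x \<and> c l = y \<and>
     (\<forall>s\<in>{0..l}. \<forall>t\<in>{0..l}. dist (c s) (c t) = \<bar>s - t\<bar>)"

definition geodesic_space :: "'a::metric_space itself \<Rightarrow> bool" where
  "geodesic_space _ \<longleftrightarrow> (\<forall>x y::'a. \<exists>c l. geodesic_seg c l x y)"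

definition gconvex :: "'a::metric_space set \<Rightarrow> bool" where
  "gconvex S \<longleftrightarrow> (\<forall>x\<in>S. \<forall>y\<in>S. \<forall>c l. geodesic_seg c l x y \<longrightarrow> c ` {0..l} \<subseteq> S)"

definition busemann_convex :: "'a::metric_space itself \<Rightarrow> bool" where
  "busemann_convex _ \<longleftrightarrow>
    (\<forall>(c1::real \<Rightarrow> 'a) c2 l1 l2 x1 y1 x2 y2.
       geodesic_seg c1 l1 x1 y1 \<and> geodesic_seg c2 l2 x2 y2 \<longrightarrow>
       (\<forall>t\<in>{0..1}. dist (c1 (t * l1)) (c2 (t * l2))
            \<le> (1 - t) * dist (c1 0) (c2 0) + t * dist (c1 l1) (c2 l2)))"

definition reflexive_space :: "'a::metric_space itself \<Rightarrow> bool" where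
  "reflexive_space _ \<longleftrightarrow>
    (\<forall>\<C>::'a set set. \<C> \<noteq> {} \<and> subset.chain UNIV \<C> \<and>
       (\<forall>S\<in>\<C>. S \<noteq> {} \<and> closed S \<and> gconvex S \<and> bounded S) \<longrightarrow> \<Inter>\<C> \<noteq> {})"

definition set_dist :: "'a::metric_space set \<Rightarrow> 'a set \<Rightarrow> real" where
  "set_dist A B = Inf {dist x y | x y. x \<in> A \<and> y \<in> B}"

definition pt_delta :: "'a::metric_space \<Rightarrow> 'a set \<Rightarrow> real" where
  "pt_delta x A = Sup {dist x y | y. y \<in> A}"

definition set_delta :: "'a::metric_space set \<Rightarrow> 'a set \<Rightarrow> real" where
  "set_delta A B = Sup {dist x y | x y. x \<in> A \<and> y \<in> B}"

definition proximal_pair :: "'a::metric_space set \<Rightarrow> 'a set \<Rightarrow> bool" where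
  "proximal_pair H1 H2 \<longleftrightarrow>
    (\<forall>a\<in>H1. \<forall>b\<in>H2. \<exists>a'\<in>H1. \<exists>b'\<in>H2.
        dist a b' = set_dist H1 H2 \<and> dist a' b = set_dist H1 H2)"

definition proximal_normal_structure :: "'a::metric_space set \<Rightarrow> 'a set \<Rightarrow> bool" where
  "proximal_normal_structure K1 K2 \<longleftrightarrow>
    (\<forall>H1 H2. H1 \<noteq> {} \<and> H2 \<noteq> {} \<and> closed H1 \<and> closed H2 \<and> bounded H1 \<and> bounded H2 \<and>
       gconvex H1 \<and> gconvex H2 \<and> proximal_pair H1 H2 \<and> H1 \<subseteq> K1 \<and> H2 \<subseteq> K2 \<and>
       set_dist H1 H2 = set_dist K1 K2 \<and> set_delta H1 H2 > set_dist H1 H2 \<longrightarrow>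
       (\<exists>x1\<in>H1. \<exists>x2\<in>H2. pt_delta x1 H2 < set_delta H1 H2 \<and> pt_delta x2 H1 < set_delta H1 H2))"

end

theory Submission
  imports Defs
begin


lemma geo_len: "geodesic_seg c l x y \<Longrightarrow> l = dist x y"
  unfolding geodesic_seg_def by (metis atLeastAtMost_iff abs_minus_commute abs_of_nonneg diff_zero order_refl dist_commute)

lemma geo_dist: "geodesic_seg c l x y \<Longrightarrow> s \<in> {0..l} \<Longrightarrow> t \<in> {0..l} \<Longrightarrow> dist (c s) (c t) = \<bar>s - t\<bar>"
  unfolding geodesic_seg_def by blast

lemma geo_0: "geodesic_seg c l x y \<Longrightarrow> c 0 = x" and geo_l: "geodesic_seg c l x y \<Longrightarrow> c l = y"
  and geo_nn: "geodesic_seg c l x y \<Longrightarrow> 0 \<le> l"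
  unfolding geodesic_seg_def by auto

lemma geo_dist0: "geodesic_seg c l x y \<Longrightarrow> s \<in> {0..l} \<Longrightarrow> dist x (c s) = s"
  using geo_dist[of c l x y 0 s] geo_0[of c l x y] geo_nn[of c l x y] by auto

lemma geo_distl: "geodesic_seg c l x y \<Longrightarrow> s \<in> {0..l} \<Longrightarrow> dist (c s) y = l - s"
  using geo_dist[of c l x y s l] geo_l[of c l x y] geo_nn[of c l x y] by auto

lemma geo_const: "geodesic_seg (\<lambda>_. y) 0 y y"
  unfolding geodesic_seg_def by auto

lemma geo_rev: "geodesic_seg c l x y \<Longrightarrow> geodesic_seg (\<lambda>s. c (l - s)) l y x"
  unfolding geodesic_seg_def by (auto simp: abs_minus_commute)

lemma geo_ex: "geodesic_space TYPE('a::metric_space) \<Longrightarrow> \<exists>c. geodesic_seg c (dist x y) (x::'a) y"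
  unfolding geodesic_space_def by (metis geo_len)

lemma conv_le: "a \<le> r \<Longrightarrow> b \<le> r \<Longrightarrow> 0 \<le> t \<Longrightarrow> t \<le> 1 \<Longrightarrow> (1-t)*a + t*b \<le> (r::real)"
proof -
  assume "a \<le> r" "b \<le> r" "0 \<le> t" "t \<le> 1"
  then have "(1-t)*a \<le> (1-t)*r" "t*b \<le> t*r" by (auto intro: mult_left_mono)
  then show ?thesis by (simp add: algebra_simps)
qed

lemma bus: "busemann_convex TYPE('a::metric_space) \<Longrightarrow> geodesic_seg c1 l1 x1 y1 \<Longrightarrow> geodesic_seg c2 l2 x2 (y2::'a)
  \<Longrightarrow> t \<in> {0..1} \<Longrightarrow> dist (c1 (t*l1)) (c2 (t*l2)) \<le> (1-t)*dist x1 x2 + t*dist y1 y2"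
  unfolding busemann_convex_def by (metis geo_0 geo_l)

lemma bus_pt: "busemann_convex TYPE('a::metric_space) \<Longrightarrow> geodesic_seg c l x1 x2
  \<Longrightarrow> t \<in> {0..1} \<Longrightarrow> dist (c (t*l)) (y::'a) \<le> (1-t)*dist x1 y + t*dist x2 y"
  using bus[OF _ _ geo_const, of c l x1 x2 t y] by simp

lemma gconvexI: "(\<And>x y c l s. x \<in> S \<Longrightarrow> y \<in> S \<Longrightarrow> geodesic_seg c l x y \<Longrightarrow> s \<in> {0..l} \<Longrightarrow> c s \<in> S) \<Longrightarrow> gconvex S"
  unfolding gconvex_def by blast

lemma gconvexD: "gconvex S \<Longrightarrow> x \<in> S \<Longrightarrow> y \<in> S \<Longrightarrow> geodesic_seg c l x y \<Longrightarrow> s \<in> {0..l} \<Longrightarrow> c s \<in> S"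
  unfolding gconvex_def by blast

lemma gconvex_Int: "gconvex S \<Longrightarrow> gconvex U \<Longrightarrow> gconvex (S \<inter> U)"
  unfolding gconvex_def by blast

lemma gconvex_Inter: "(\<And>S. S \<in> F \<Longrightarrow> gconvex S) \<Longrightarrow> gconvex (\<Inter>F)"
  unfolding gconvex_def by blast

lemma param: "geodesic_seg c l x y \<Longrightarrow> s \<in> {0..l} \<Longrightarrow> l \<noteq> 0 \<Longrightarrow> s/l \<in> {0..1} \<and> c s = c ((s/l)*l)"
  using geo_nn[of c l x y] by auto

lemma gconvex_cball: assumes "busemann_convex TYPE('a::metric_space)" shows "gconvex (cball (z::'a) r)"
proof (rule gconvexI)
  fix x y c l s assume xy: "x \<in> cball z r" "y \<in> cball z r" and g: "geodesic_seg c l x y" and s: "s \<in> {0..l}"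
  show "c s \<in> cball z r"
  proof (cases "l = 0")
    case True then show ?thesis using s xy geo_0[OF g] by auto
  next
    case False
    then have p: "s/l \<in> {0..1}" "c s = c ((s/l)*l)" using param[OF g s] by auto
    have "dist (c s) z \<le> (1 - s/l) * dist x z + (s/l) * dist y z"
      using bus_pt[OF assms g p(1)] p(2) by simp
    also have "\<dots> \<le> r" using xy p(1) by (intro conv_le) (auto simp: dist_commute)
    finally show ?thesis by (simp add: dist_commute)
  qed
qed



lemma concat_geo:
  assumes a: "geodesic_seg \<alpha> s1 z a" and b: "geodesic_seg \<beta> s2 a m" and d: "dist z m = s1 + s2"
  shows "geodesic_seg (\<lambda>t. if t \<le> s1 then \<alpha> t else \<beta> (t - s1)) (s1 + s2) z m"
proof -
  have s1: "0 \<le> s1" and s2: "0 \<le> s2" using geo_nn a b by auto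
  have a0: "\<alpha> 0 = z" "\<alpha> s1 = a" "\<beta> 0 = a" "\<beta> s2 = m" using geo_0 geo_l a b by auto
  let ?G = "\<lambda>t. if t \<le> s1 then \<alpha> t else \<beta> (t - s1)"
  have cross: "dist (\<alpha> u) (\<beta> (v - s1)) = v - u" if u: "u \<in> {0..s1}" and v: "v \<in> {s1..s1+s2}" for u v
  proof -
    have "dist (\<alpha> u) (\<beta> (v - s1)) \<le> dist (\<alpha> u) a + dist a (\<beta> (v - s1))" by (rule dist_triangle)
    also have "\<dots> = (s1 - u) + (v - s1)" using geo_distl[OF a u] geo_dist0[OF b, of "v - s1"] v by auto
    finally have le: "dist (\<alpha> u) (\<beta> (v - s1)) \<le> v - u" by simp
    have "s1 + s2 = dist z m" using d by simp
    also have "\<dots> \<le> dist z (\<alpha> u) + dist (\<alpha> u) (\<beta> (v - s1)) + dist (\<beta> (v - s1)) m"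
      using dist_triangle[of z m "\<alpha> u"] dist_triangle[of "\<alpha> u" m "\<beta> (v - s1)"] by linarith
    also have "\<dots> = u + dist (\<alpha> u) (\<beta> (v - s1)) + (s2 - (v - s1))"
      using geo_dist0[OF a u] geo_distl[OF b, of "v - s1"] v by auto
    finally show ?thesis using le by linarith
  qed
  show ?thesis unfolding geodesic_seg_def
  proof (intro conjI ballI)
    show "0 \<le> s1 + s2" using s1 s2 by simp
    show "?G 0 = z" using s1 a0 by simp
    show "?G (s1 + s2) = m"
    proof (cases "s2 = 0")
      case True
      then have "m = a" using geo_len[OF b] by simp
      then show ?thesis using True a0 by simp
    next
      case False then show ?thesis using s2 a0 by simp
    qed
    fix u v assume u: "u \<in> {0..s1+s2}" and v: "v \<in> {0..s1+s2}"
    show "dist (?G u) (?G v) = \<bar>u - v\<bar>"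
    proof (cases "u \<le> s1")
      case True note u1 = True
      show ?thesis
      proof (cases "v \<le> s1")
        case True
        have "dist (\<alpha> u) (\<alpha> v) = \<bar>u - v\<bar>" by (rule geo_dist[OF a]) (use u v u1 True in auto)
        then show ?thesis using u1 True by simp
      next
        case False
        have "dist (\<alpha> u) (\<beta> (v - s1)) = v - u" by (rule cross) (use u v u1 False in auto)
        then show ?thesis using u1 False by simp
      qed
    next
      case False note u1 = False
      show ?thesis
      proof (cases "v \<le> s1")
        case True
        have "dist (\<alpha> v) (\<beta> (u - s1)) = u - v" by (rule cross) (use u v u1 True in auto)
        then show ?thesis using u1 True by (simp add: dist_commute)
      next
        case False
        have "dist (\<beta> (u - s1)) (\<beta> (v - s1)) = \<bar>(u - s1) - (v - s1)\<bar>" by (rule geo_dist[OF b]) (use u v u1 False in auto)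
        then show ?thesis using u1 False by simp
      qed
    qed
  qed
qed

lemma midpoint_unique:
  assumes bc: "busemann_convex TYPE('a::metric_space)" and gs: "geodesic_space TYPE('a)"
    and "dist z p = h" "dist p w = h" "dist z q = h" "dist q w = h" "dist z w = 2*h"
  shows "p = (q::'a)"
proof -
  obtain \<alpha>1 \<beta>1 \<alpha>2 \<beta>2 where g: "geodesic_seg \<alpha>1 h z p" "geodesic_seg \<beta>1 h p w"
     "geodesic_seg \<alpha>2 h z q" "geodesic_seg \<beta>2 h q w"
  proof -
    obtain a1 where "geodesic_seg a1 (dist z p) z p" using geo_ex[OF gs] by blast
    moreover obtain b1 where "geodesic_seg b1 (dist p w) p w" using geo_ex[OF gs] by blast
    moreover obtain a2 where "geodesic_seg a2 (dist z q) z q" using geo_ex[OF gs] by blast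
    moreover obtain b2 where "geodesic_seg b2 (dist q w) q w" using geo_ex[OF gs] by blast
    ultimately show ?thesis using that assms by simp
  qed
  have s: "0 \<le> h" using geo_nn g by auto
  have d: "dist z w = h + h" using assms by simp
  note G1 = concat_geo[OF g(1,2) d] and G2 = concat_geo[OF g(3,4) d]
  have "dist ((\<lambda>t. if t \<le> h then \<alpha>1 t else \<beta>1 (t - h)) ((1/2) * (h+h))) ((\<lambda>t. if t \<le> h then \<alpha>2 t else \<beta>2 (t - h)) ((1/2)*(h+h)))
     \<le> (1 - 1/2) * dist z z + (1/2) * dist w w"
    by (rule bus[OF bc G1 G2]) auto
  then show ?thesis using geo_l[OF g(1)] geo_l[OF g(3)] by simp
qed



lemma sphere_half:
  assumes bc: "busemann_convex TYPE('a::metric_space)" and gs: "geodesic_space TYPE('a)"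
    and g: "geodesic_seg c L x y" and H: "\<forall>t\<in>{0..L}. dist (c t) (z::'a) = r"
  shows "\<exists>p. \<forall>t\<in>{0..L}. dist (c t) p = r/2"
proof -
  have L: "0 \<le> L" using geo_nn[OF g] .
  have rx: "dist x z = r" using H geo_0[OF g] L by (metis atLeastAtMost_iff order_refl)
  have ry: "dist y z = r" using H geo_l[OF g] L by (metis atLeastAtMost_iff order_refl)
  have r: "0 \<le> r" using rx by auto
  obtain \<gamma>0 where g0: "geodesic_seg \<gamma>0 r z x" using geo_ex[OF gs, of z x] rx by (auto simp: dist_commute)
  obtain \<gamma>1 where g1: "geodesic_seg \<gamma>1 r z y" using geo_ex[OF gs, of z y] ry by (auto simp: dist_commute)
  define p where "p = \<gamma>0 (r/2)"
  define q where "q = \<gamma>1 (r/2)"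
  define m where "m = c ((1/2)*L)"
  have hr: "r/2 \<in> {0..r}" using r by auto
  have zp: "dist z p = r/2" unfolding p_def using geo_dist0[OF g0 hr] .
  have zq: "dist z q = r/2" unfolding q_def using geo_dist0[OF g1 hr] .
  have px: "dist p x = r/2" unfolding p_def using geo_distl[OF g0 hr] by simp
  have qy: "dist q y = r/2" unfolding q_def using geo_distl[OF g1 hr] by simp
  have mz: "dist z m = r" unfolding m_def using H L by (simp add: dist_commute)
  have e1: "r - (1/2)*r = r/2" by simp
  have "dist ((\<lambda>s. \<gamma>0 (r - s)) ((1/2)*r)) (c ((1/2)*L)) \<le> (1 - 1/2) * dist x x + (1/2) * dist z y"
    by (rule bus[OF bc geo_rev[OF g0] g]) auto
  then have pm1: "dist p m \<le> r/2" unfolding p_def m_def using e1 ry by (simp add: dist_commute)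
  have pm: "dist p m = r/2" using pm1 mz zp dist_triangle[of z m p] by linarith
  have e2: "L - (1/2)*L = (1/2)*L" by simp
  have "dist ((\<lambda>s. \<gamma>1 (r - s)) ((1/2)*r)) ((\<lambda>s. c (L - s)) ((1/2)*L)) \<le> (1 - 1/2) * dist y y + (1/2) * dist z x"
    by (rule bus[OF bc geo_rev[OF g1] geo_rev[OF g]]) auto
  then have qm1: "dist q m \<le> r/2" unfolding q_def m_def using e1 e2 rx by (simp add: dist_commute)
  have qm: "dist q m = r/2" using qm1 mz zq dist_triangle[of z m q] by linarith
  have pq: "p = q" by (rule midpoint_unique[OF bc gs zp pm zq qm]) (use mz in simp)
  have py: "dist p y = r/2" using pq qy by simp
  show ?thesis
  proof (intro exI ballI)
    fix t assume t: "t \<in> {0..L}"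
    have "dist (c t) z = r" using H t by blast
    then have ge: "r/2 \<le> dist (c t) p" using zp dist_triangle[of "c t" z p] by (simp add: dist_commute)
    show "dist (c t) p = r/2"
    proof (cases "L = 0")
      case True then have "t = 0" using t by auto
      then show ?thesis using geo_0[OF g] px by (simp add: dist_commute)
    next
      case False
      then have pr: "t/L \<in> {0..1}" "c t = c ((t/L)*L)" using param[OF g t] by auto
      have "dist (c t) p \<le> (1 - t/L) * dist x p + (t/L) * dist y p"
        using bus_pt[OF bc g pr(1)] pr(2) by simp
      also have "\<dots> \<le> r/2" using px py pr(1) by (intro conv_le) (auto simp: dist_commute)
      finally show ?thesis using ge by simp
    qed
  qed
qed

lemma sphere_strict:
  assumes bc: "busemann_convex TYPE('a::metric_space)" and gs: "geodesic_space TYPE('a)"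
    and g: "geodesic_seg c L x y" and H: "\<forall>t\<in>{0..L}. dist (c t) (z::'a) = r"
  shows "x = y"
proof -
  have ex: "\<exists>p. \<forall>t\<in>{0..L}. dist (c t) p = r / 2^n" for n
  proof (induction n)
    case 0 then show ?case using H by auto
  next
    case (Suc n)
    then obtain p where "\<forall>t\<in>{0..L}. dist (c t) p = r / 2^n" by blast
    from sphere_half[OF bc gs g this] show ?case by (simp add: field_simps)
  qed
  have L: "0 \<le> L" using geo_nn[OF g] .
  have r: "0 \<le> r" using H L by (metis atLeastAtMost_iff order_refl zero_le_dist)
  have bnd: "L \<le> 2 * r * (1/2)^n" for n
  proof -
    obtain p where p: "\<forall>t\<in>{0..L}. dist (c t) p = r / 2^n" using ex by blast
    have "L = dist x y" using geo_len[OF g] .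
    also have "\<dots> \<le> dist x p + dist p y" by (rule dist_triangle)
    also have "\<dots> = 2 * (r / 2^n)" using p geo_0[OF g] geo_l[OF g] L
      by (metis atLeastAtMost_iff dist_commute mult_2 order_refl)
    finally show ?thesis by (simp add: power_one_over)
  qed
  have "L \<le> 0"
  proof (rule ccontr)
    assume "\<not> L \<le> 0"
    then have Lp: "0 < L" by simp
    show False
    proof (cases "r = 0")
      case True then show ?thesis using bnd[of 0] Lp by simp
    next
      case False
      then have rp: "0 < r" using r by simp
      obtain n where "(1/2::real)^n < L / (2*r)" using real_arch_pow_inv[of "L/(2*r)" "1/2"] Lp rp by auto
      then have "2*r*(1/2)^n < L" using rp by (simp add: field_simps)
      then show False using bnd[of n] by simp
    qed
  qed
  then show ?thesis using geo_len[OF g] L by simp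
qed



lemma infdist_lessD: "F \<noteq> {} \<Longrightarrow> infdist x F < e \<Longrightarrow> \<exists>y\<in>F. dist x y < e"
  unfolding infdist_notempty
  by (subst (asm) cINF_less_iff) (auto intro: bdd_belowI2[where m=0])

lemma refl_chain:
  assumes "reflexive_space TYPE('a::metric_space)" "\<C> \<noteq> {}" "\<forall>S\<in>\<C>. \<forall>U\<in>\<C>. S \<subseteq> U \<or> U \<subseteq> S"
    "\<forall>S\<in>\<C>. S \<noteq> {} \<and> closed S \<and> gconvex S \<and> bounded S"
  shows "\<Inter>\<C> \<noteq> ({}::'a set)"
  using assms unfolding reflexive_space_def subset_chain_def by blast

lemma refl_seq:
  assumes "reflexive_space TYPE('a::metric_space)" "\<And>n. S (Suc n) \<subseteq> S n"
    "\<And>n. S n \<noteq> {}" "\<And>n. closed (S n)" "\<And>n. gconvex (S n)" "\<And>n. bounded (S n)"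
  shows "\<exists>x::'a. \<forall>n. x \<in> S n"
proof -
  have mono: "m \<le> n \<Longrightarrow> S n \<subseteq> S m" for m n using lift_Suc_antimono_le[of S] assms(2) by blast
  have "\<Inter>(range S) \<noteq> {}"
  proof (rule refl_chain[OF assms(1)])
    show "range S \<noteq> {}" by simp
    show "\<forall>A\<in>range S. \<forall>U\<in>range S. A \<subseteq> U \<or> U \<subseteq> A"
    proof (intro ballI)
      fix A U assume "A \<in> range S" "U \<in> range S"
      then obtain m n where "A = S m" "U = S n" by blast
      then show "A \<subseteq> U \<or> U \<subseteq> A" using mono nat_le_linear[of m n] by blast
    qed
    show "\<forall>A\<in>range S. A \<noteq> {} \<and> closed A \<and> gconvex A \<and> bounded A" using assms(3-6) by blast
  qed
  then show ?thesis by auto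
qed

lemma gconvex_sublevel:
  fixes E F :: "'a::metric_space set"
  assumes bc: "busemann_convex TYPE('a)" and gs: "geodesic_space TYPE('a)"
    and E: "gconvex E" and F: "gconvex F" "F \<noteq> {}"
  shows "gconvex {x\<in>E. infdist x F \<le> (r::real)}"
proof (rule gconvexI)
  fix x1 x2 :: 'a and c l s
  assume x1: "x1 \<in> {x\<in>E. infdist x F \<le> r}" and x2: "x2 \<in> {x\<in>E. infdist x F \<le> r}"
    and g: "geodesic_seg c l x1 x2" and s: "s \<in> {0..l}"
  have cE: "c s \<in> E" using gconvexD[OF E _ _ g s] x1 x2 by auto
  have "infdist (c s) F \<le> r"
  proof (cases "l = 0")
    case True then show ?thesis using s x1 geo_0[OF g] by auto
  next
    case False
    then have pr: "s/l \<in> {0..1}" "c s = c ((s/l)*l)" using param[OF g s] by auto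
    show ?thesis
    proof (rule field_le_epsilon)
      fix e :: real assume e: "0 < e"
      obtain y1 where y1: "y1 \<in> F" "dist x1 y1 < r + e" using infdist_lessD[OF F(2), of x1 "r+e"] x1 e by auto
      obtain y2 where y2: "y2 \<in> F" "dist x2 y2 < r + e" using infdist_lessD[OF F(2), of x2 "r+e"] x2 e by auto
      obtain c2 where g2: "geodesic_seg c2 (dist y1 y2) y1 y2" using geo_ex[OF gs] by blast
      have inF: "c2 ((s/l) * dist y1 y2) \<in> F"
      proof (rule gconvexD[OF F(1) y1(1) y2(1) g2])
        have "(s/l) * dist y1 y2 \<le> dist y1 y2" using pr(1) by (intro mult_left_le_one_le) auto
        moreover have "0 \<le> (s/l) * dist y1 y2" using pr(1) by (intro mult_nonneg_nonneg) auto
        ultimately show "(s/l) * dist y1 y2 \<in> {0..dist y1 y2}" by (simp only: atLeastAtMost_iff)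
      qed
      have "infdist (c s) F \<le> dist (c s) (c2 ((s/l) * dist y1 y2))" by (rule infdist_le[OF inF])
      also have "\<dots> \<le> (1 - s/l) * dist x1 y1 + (s/l) * dist x2 y2"
        using bus[OF bc g g2 pr(1)] pr(2) by simp
      also have "\<dots> \<le> r + e" using y1 y2 pr(1) by (intro conv_le) auto
      finally show "infdist (c s) F \<le> r + e" .
    qed
  qed
  then show "c s \<in> {x\<in>E. infdist x F \<le> r}" using cE by simp
qed

lemma closed_sublevel: "closed E \<Longrightarrow> closed {x\<in>E. infdist x F \<le> (r::real)}"
proof -
  assume "closed E"
  moreover have "closed {x. infdist x F \<le> r}"
    by (rule closed_Collect_le) (auto intro: continuous_intros)
  ultimately show ?thesis by (simp add: Collect_conj_eq closed_Int)
qed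

lemma attain:
  assumes rf: "reflexive_space TYPE('a::metric_space)" and bc: "busemann_convex TYPE('a)"
    and F: "closed F" "gconvex F" "F \<noteq> {}" and d: "infdist x F \<le> r"
  shows "\<exists>y\<in>F. dist (x::'a) y \<le> r"
proof -
  define S where "S n = F \<inter> cball x (r + 1/Suc n)" for n
  have "\<exists>y. \<forall>n. y \<in> S n"
  proof (rule refl_seq[OF rf])
    fix n
    have "r + 1/Suc (Suc n) \<le> r + 1/Suc n" by (simp add: frac_le)
    then show "S (Suc n) \<subseteq> S n" unfolding S_def by auto
    have "infdist x F < r + 1/Suc n" using d by (smt (verit) of_nat_0_less_iff zero_less_Suc divide_pos_pos)
    then show "S n \<noteq> {}" unfolding S_def using infdist_lessD[OF F(3)] by fastforce
    show "closed (S n)" unfolding S_def using F by auto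
    show "gconvex (S n)" unfolding S_def using F gconvex_cball[OF bc] by (auto intro: gconvex_Int)
    show "bounded (S n)" unfolding S_def by auto
  qed
  then obtain y where y: "\<forall>n. y \<in> S n" by blast
  have "y \<in> F" using y S_def by auto
  moreover have "dist x y \<le> r"
  proof (rule field_le_epsilon)
    fix e :: real assume e: "0 < e"
    obtain n where n: "1/Suc n < e" using e by (metis nat_approx_posE)
    have "dist x y \<le> r + 1/Suc n" using y[rule_format, of n] unfolding S_def by auto
    then show "dist x y \<le> r + e" using n by simp
  qed
  ultimately show ?thesis by blast
qed



definition adm :: "'a::metric_space set \<Rightarrow> 'a set \<Rightarrow> ('a \<Rightarrow> 'a) \<Rightarrow> real \<Rightarrow> 'a set \<Rightarrow> 'a set \<Rightarrow> bool" where
  "adm A B T D E F \<longleftrightarrow> E \<subseteq> A \<and> F \<subseteq> B \<and> closed E \<and> closed F \<and> gconvex E \<and> gconvex F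
     \<and> T ` E \<subseteq> E \<and> T ` F \<subseteq> F \<and> (\<exists>x\<in>E. \<exists>y\<in>F. dist x y = D)"

lemma admD:
  assumes "adm A B T D E F"
  shows "E \<subseteq> A" "F \<subseteq> B" "closed E" "closed F" "gconvex E" "gconvex F" "T ` E \<subseteq> E" "T ` F \<subseteq> F"
    "\<exists>x\<in>E. \<exists>y\<in>F. dist x y = D"
  using assms unfolding adm_def by auto

lemma chain_adm:
  fixes A B :: "'a::metric_space set"
  assumes rf: "reflexive_space TYPE('a)" and bc: "busemann_convex TYPE('a)"
    and gs: "geodesic_space TYPE('a)" and Abd: "bounded A"
    and Dle: "\<And>x y. x \<in> A \<Longrightarrow> y \<in> B \<Longrightarrow> D \<le> dist x y"
    and Cne: "C \<noteq> {}" and Cadm: "\<And>a. a \<in> C \<Longrightarrow> adm A B T D (fst a) (snd a)"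
    and Ccmp: "\<And>a b. a \<in> C \<Longrightarrow> b \<in> C \<Longrightarrow> (fst a \<subseteq> fst b \<and> snd a \<subseteq> snd b) \<or> (fst b \<subseteq> fst a \<and> snd b \<subseteq> snd a)"
  shows "adm A B T D (\<Inter>(fst ` C)) (\<Inter>(snd ` C))"
proof -
  obtain a0 where a0: "a0 \<in> C" using Cne by blast
  define L where "L a = {x\<in>fst a. infdist x (snd a) \<le> D}" for a :: "'a set \<times> 'a set"
  have "\<Inter>(L ` C) \<noteq> {}"
  proof (rule refl_chain[OF rf])
    show "L ` C \<noteq> {}" using Cne by simp
    show "\<forall>S\<in>L ` C. \<forall>U\<in>L ` C. S \<subseteq> U \<or> U \<subseteq> S"
    proof (intro ballI)
      fix S U assume "S \<in> L ` C" "U \<in> L ` C"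
      then obtain a b where ab: "a \<in> C" "b \<in> C" "S = L a" "U = L b" by blast
      have sub: "L b \<subseteq> L a" if "fst b \<subseteq> fst a" "snd b \<subseteq> snd a" "b \<in> C" for a b
      proof
        fix x assume x: "x \<in> L b"
        have "snd b \<noteq> {}" using admD(9)[OF Cadm[OF that(3)]] by blast
        then have "infdist x (snd a) \<le> infdist x (snd b)" using that(2) by (intro infdist_mono)
        then show "x \<in> L a" using x that(1) unfolding L_def by auto
      qed
      show "S \<subseteq> U \<or> U \<subseteq> S" using Ccmp[OF ab(1,2)] sub[of b a] sub[of a b] ab by blast
    qed
    show "\<forall>S\<in>L ` C. S \<noteq> {} \<and> closed S \<and> gconvex S \<and> bounded S"
    proof
      fix S assume "S \<in> L ` C"
      then obtain a where a: "a \<in> C" "S = L a" by blast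
      note ca = admD[OF Cadm[OF a(1)]]
      obtain x y where xy: "x \<in> fst a" "y \<in> snd a" "dist x y = D" using ca(9) by blast
      then have "x \<in> L a" unfolding L_def using infdist_le[of y "snd a" x] by auto
      moreover have "closed (L a)" unfolding L_def using ca(3) by (rule closed_sublevel)
      moreover have "gconvex (L a)" unfolding L_def using xy(2) by (intro gconvex_sublevel[OF bc gs ca(5) ca(6)]) auto
      moreover have "bounded (L a)" unfolding L_def using ca(1) by (intro bounded_subset[OF Abd]) auto
      ultimately show "S \<noteq> {} \<and> closed S \<and> gconvex S \<and> bounded S" using a by blast
    qed
  qed
  then obtain x0 where x0: "\<forall>a\<in>C. x0 \<in> L a" by blast
  define M where "M a = snd a \<inter> cball x0 D" for a :: "'a set \<times> 'a set"
  have "\<Inter>(M ` C) \<noteq> {}"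
  proof (rule refl_chain[OF rf])
    show "M ` C \<noteq> {}" using Cne by simp
    show "\<forall>S\<in>M ` C. \<forall>U\<in>M ` C. S \<subseteq> U \<or> U \<subseteq> S"
    proof (intro ballI)
      fix S U assume "S \<in> M ` C" "U \<in> M ` C"
      then obtain a b where ab: "a \<in> C" "b \<in> C" "S = M a" "U = M b" by blast
      show "S \<subseteq> U \<or> U \<subseteq> S" using Ccmp[OF ab(1,2)] ab unfolding M_def by blast
    qed
    show "\<forall>S\<in>M ` C. S \<noteq> {} \<and> closed S \<and> gconvex S \<and> bounded S"
    proof
      fix S assume "S \<in> M ` C"
      then obtain a where a: "a \<in> C" "S = M a" by blast
      note ca = admD[OF Cadm[OF a(1)]]
      have sn: "snd a \<noteq> {}" using ca(9) by blast
      have "infdist x0 (snd a) \<le> D" using x0 a(1) unfolding L_def by auto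
      then obtain y where "y \<in> snd a" "dist x0 y \<le> D" using attain[OF rf bc ca(4) ca(6) sn] by blast
      then have "y \<in> M a" unfolding M_def by auto
      moreover have "closed (M a)" unfolding M_def using ca(4) by auto
      moreover have "gconvex (M a)" unfolding M_def using ca(6) gconvex_cball[OF bc] by (rule gconvex_Int)
      moreover have "bounded (M a)" unfolding M_def by auto
      ultimately show "S \<noteq> {} \<and> closed S \<and> gconvex S \<and> bounded S" using a by blast
    qed
  qed
  then obtain y0 where y0: "\<forall>a\<in>C. y0 \<in> M a" by blast
  have x0E: "x0 \<in> \<Inter>(fst ` C)" using x0 unfolding L_def by auto
  have y0F: "y0 \<in> \<Inter>(snd ` C)" using y0 unfolding M_def by auto
  have EA: "\<Inter>(fst ` C) \<subseteq> A" using a0 admD(1)[OF Cadm[OF a0]] by auto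
  have FB: "\<Inter>(snd ` C) \<subseteq> B" using a0 admD(2)[OF Cadm[OF a0]] by auto
  have "dist x0 y0 \<le> D" using y0 a0 unfolding M_def by auto
  moreover have "D \<le> dist x0 y0" using Dle x0E y0F EA FB by blast
  ultimately have dxy: "dist x0 y0 = D" by simp
  show ?thesis unfolding adm_def
  proof (intro conjI)
    show "\<Inter>(fst ` C) \<subseteq> A" "\<Inter>(snd ` C) \<subseteq> B" by fact+
    show "closed (\<Inter>(fst ` C))" using admD(3)[OF Cadm] by auto
    show "closed (\<Inter>(snd ` C))" using admD(4)[OF Cadm] by auto
    show "gconvex (\<Inter>(fst ` C))" using admD(5)[OF Cadm] by (intro gconvex_Inter) auto
    show "gconvex (\<Inter>(snd ` C))" using admD(6)[OF Cadm] by (intro gconvex_Inter) auto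
    show "T ` (\<Inter>(fst ` C)) \<subseteq> \<Inter>(fst ` C)" using admD(7)[OF Cadm] by blast
    show "T ` (\<Inter>(snd ` C)) \<subseteq> \<Inter>(snd ` C)" using admD(8)[OF Cadm] by blast
    show "\<exists>x\<in>\<Inter>(fst ` C). \<exists>y\<in>\<Inter>(snd ` C). dist x y = D" using x0E y0F dxy by blast
  qed
qed

lemma zorn_min:
  fixes A B :: "'a::metric_space set"
  assumes rf: "reflexive_space TYPE('a)" and bc: "busemann_convex TYPE('a)"
    and gs: "geodesic_space TYPE('a)" and Abd: "bounded A"
    and Dle: "\<And>x y. x \<in> A \<Longrightarrow> y \<in> B \<Longrightarrow> D \<le> dist x y"
    and AB: "adm A B T D A B"
  shows "\<exists>K1 K2. adm A B T D K1 K2 \<and> (\<forall>E F. adm A B T D E F \<longrightarrow> E \<subseteq> K1 \<longrightarrow> F \<subseteq> K2 \<longrightarrow> E = K1 \<and> F = K2)"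
proof -
  define fam where "fam = {P. adm A B T D (fst P) (snd P)}"
  define le where "le = (\<lambda>P Q::'a set \<times> 'a set. fst Q \<subseteq> fst P \<and> snd Q \<subseteq> snd P)"
  define r where "r = relation_of le fam"
  have po: "partial_order_on fam r" unfolding r_def
  proof (rule partial_order_on_relation_ofI)
    show "le a a" for a unfolding le_def by simp
    show "le a c" if "le a b" "le b c" for a b c using that unfolding le_def by blast
    show "a = b" if "le a b" "le b a" for a b using that unfolding le_def by (simp add: prod_eq_iff subset_antisym)
  qed
  have Fr: "Field r = fam" using po unfolding r_def
    by (simp_all only: Field_relation_of partial_order_on_def preorder_on_def)
  have ABfam: "(A, B) \<in> fam" unfolding fam_def using AB by simp
  have "\<exists>m\<in>Field r. \<forall>a\<in>Field r. (m, a) \<in> r \<longrightarrow> a = m"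
  proof (rule Zorns_po_lemma)
    show "Partial_order r" using po Fr by simp
    fix C assume C: "C \<in> Chains r"
    show "\<exists>u\<in>Field r. \<forall>a\<in>C. (a, u) \<in> r"
    proof (cases "C = {}")
      case True then show ?thesis using ABfam Fr by auto
    next
      case False
      have Cfam: "a \<in> fam" if "a \<in> C" for a using C that unfolding Chains_def r_def relation_of_def by blast
      have Ccmp: "le a b \<or> le b a" if "a \<in> C" "b \<in> C" for a b
        using C that unfolding Chains_def r_def relation_of_def by blast
      have uf: "adm A B T D (\<Inter>(fst ` C)) (\<Inter>(snd ` C))"
      proof (rule chain_adm[OF rf bc gs Abd Dle False])
        show "adm A B T D (fst a) (snd a)" if "a \<in> C" for a using Cfam[OF that] unfolding fam_def by simp
        show "(fst a \<subseteq> fst b \<and> snd a \<subseteq> snd b) \<or> (fst b \<subseteq> fst a \<and> snd b \<subseteq> snd a)" if "a \<in> C" "b \<in> C" for a b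
          using Ccmp[OF that] unfolding le_def by blast
      qed
      then have uf': "(\<Inter>(fst ` C), \<Inter>(snd ` C)) \<in> fam" unfolding fam_def by simp
      show ?thesis
      proof (intro bexI ballI)
        show "(\<Inter>(fst ` C), \<Inter>(snd ` C)) \<in> Field r" using uf' Fr by simp
        fix a assume a: "a \<in> C"
        have "le a (\<Inter>(fst ` C), \<Inter>(snd ` C))" unfolding le_def using a by auto
        then show "(a, (\<Inter>(fst ` C), \<Inter>(snd ` C))) \<in> r" unfolding r_def relation_of_def
          using Cfam[OF a] uf' by blast
      qed
    qed
  qed
  then obtain m where mfam: "m \<in> fam" and mmin: "\<forall>a\<in>fam. (m, a) \<in> r \<longrightarrow> a = m" using Fr by auto
  have mA: "adm A B T D (fst m) (snd m)" using mfam unfolding fam_def by simp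
  have "E = fst m \<and> F = snd m" if EF: "adm A B T D E F" "E \<subseteq> fst m" "F \<subseteq> snd m" for E F
  proof -
    have ef: "(E, F) \<in> fam" unfolding fam_def using EF(1) by simp
    have "le m (E, F)" unfolding le_def using EF by simp
    then have "(m, (E, F)) \<in> r" unfolding r_def relation_of_def using mfam ef by blast
    then have "(E, F) = m" using mmin ef by blast
    then show "E = fst m \<and> F = snd m" by auto
  qed
  then show ?thesis using mA by blast
qed



lemma final_step:
  fixes A B K1 K2 :: "'a::metric_space set" and T :: "'a \<Rightarrow> 'a"
  assumes rf: "reflexive_space TYPE('a)" and bc: "busemann_convex TYPE('a)"
    and gs: "geodesic_space TYPE('a)" and Abd: "bounded A"
    and Tne: "\<forall>x\<in>A. \<forall>y\<in>B. dist (T x) (T y) \<le> dist x y"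
    and pns: "proximal_normal_structure A B" and Ddef: "D = set_dist A B"
    and Dle: "\<And>x y. x \<in> A \<Longrightarrow> y \<in> B \<Longrightarrow> D \<le> dist x y"
    and Kadm: "adm A B T D K1 K2"
    and minimal: "\<And>E F. adm A B T D E F \<Longrightarrow> E \<subseteq> K1 \<Longrightarrow> F \<subseteq> K2 \<Longrightarrow> E = K1 \<and> F = K2"
  shows "\<exists>x\<in>A. \<exists>y\<in>B. T x = x \<and> T y = y \<and> dist x y = D"
proof -
  have K: "K1 \<subseteq> A" "K2 \<subseteq> B" "closed K1" "closed K2" "gconvex K1" "gconvex K2" "T ` K1 \<subseteq> K1" "T ` K2 \<subseteq> K2"
    "\<exists>x\<in>K1. \<exists>y\<in>K2. dist x y = D" using Kadm unfolding adm_def by auto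
  have K1n: "K1 \<noteq> {}" and K2n: "K2 \<noteq> {}" using K(9) by auto
  have KDle: "D \<le> dist x y" if "x \<in> K1" "y \<in> K2" for x y using Dle that K(1,2) by blast
  have TK: "dist (T x) (T y) \<le> dist x y" if "x \<in> K1" "y \<in> K2" for x y using Tne that K(1,2) by blast
  define K1' where "K1' = {x\<in>K1. infdist x K2 \<le> D}"
  define K2' where "K2' = {y\<in>K2. infdist y K1 \<le> D}"
  have "adm A B T D K1' K2'" unfolding adm_def
  proof (intro conjI)
    show "K1' \<subseteq> A" "K2' \<subseteq> B" unfolding K1'_def K2'_def using K by auto
    show "closed K1'" unfolding K1'_def by (rule closed_sublevel[OF K(3)])
    show "closed K2'" unfolding K2'_def by (rule closed_sublevel[OF K(4)])
    show "gconvex K1'" unfolding K1'_def by (rule gconvex_sublevel[OF bc gs K(5) K(6) K2n])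
    show "gconvex K2'" unfolding K2'_def by (rule gconvex_sublevel[OF bc gs K(6) K(5) K1n])
    show "T ` K1' \<subseteq> K1'"
    proof
      fix z assume "z \<in> T ` K1'"
      then obtain x where x: "x \<in> K1'" "z = T x" by blast
      obtain y where y: "y \<in> K2" "dist x y \<le> D" using attain[OF rf bc K(4) K(6) K2n] x(1) unfolding K1'_def by blast
      have "dist (T x) (T y) \<le> D" using TK[of x y] x y unfolding K1'_def by auto
      moreover have "T y \<in> K2" "T x \<in> K1" using K(7,8) x y unfolding K1'_def by auto
      ultimately show "z \<in> K1'" unfolding K1'_def using x(2) infdist_le2 by blast
    qed
    show "T ` K2' \<subseteq> K2'"
    proof
      fix z assume "z \<in> T ` K2'"
      then obtain y where y: "y \<in> K2'" "z = T y" by blast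
      obtain x where x: "x \<in> K1" "dist y x \<le> D" using attain[OF rf bc K(3) K(5) K1n] y(1) unfolding K2'_def by blast
      have "dist (T y) (T x) \<le> D" using TK[of x y] x y unfolding K2'_def by (auto simp: dist_commute)
      moreover have "T y \<in> K2" "T x \<in> K1" using K(7,8) x y unfolding K2'_def by auto
      ultimately show "z \<in> K2'" unfolding K2'_def using y(2) infdist_le2 by blast
    qed
    obtain x0 y0 where xy0: "x0 \<in> K1" "y0 \<in> K2" "dist x0 y0 = D" using K(9) by blast
    have "x0 \<in> K1'" unfolding K1'_def using xy0 infdist_le2[of y0 K2 x0 D] by auto
    moreover have "y0 \<in> K2'" unfolding K2'_def using xy0 infdist_le2[of x0 K1 y0 D] by (auto simp: dist_commute)
    ultimately show "\<exists>x\<in>K1'. \<exists>y\<in>K2'. dist x y = D" using xy0 by blast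
  qed
  then have KK: "K1' = K1" "K2' = K2" using minimal[of K1' K2'] unfolding K1'_def K2'_def by auto
  have prox1: "\<exists>y\<in>K2. dist x y = D" if "x \<in> K1" for x
  proof -
    have "infdist x K2 \<le> D" using that KK(1) unfolding K1'_def by auto
    then obtain y where "y \<in> K2" "dist x y \<le> D" using attain[OF rf bc K(4) K(6) K2n] by blast
    then show ?thesis using KDle[OF that] by (metis antisym)
  qed
  have prox2: "\<exists>x\<in>K1. dist x y = D" if "y \<in> K2" for y
  proof -
    have "infdist y K1 \<le> D" using that KK(2) unfolding K2'_def by auto
    then obtain x where "x \<in> K1" "dist y x \<le> D" using attain[OF rf bc K(3) K(5) K1n] by blast
    then show ?thesis using KDle[OF _ that] by (metis antisym dist_commute)
  qed
  obtain a R where aR: "\<forall>z\<in>A. dist a z \<le> R" using Abd unfolding bounded_def by blast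
  have aK2: "dist a y \<le> R + D" if yK: "y \<in> K2" for y
  proof -
    obtain x where x: "x \<in> K1" "dist x y = D" using prox2[OF yK] by blast
    then show ?thesis using aR K(1) dist_triangle[of a y x] by fastforce
  qed
  have K1bd: "bounded K1" using Abd K(1) bounded_subset by blast
  have K2bd: "bounded K2" unfolding bounded_def using aK2 by blast
  have cross_bd: "dist x y \<le> 2*R + D" if "x \<in> K1" "y \<in> K2" for x y
    using aR aK2[OF that(2)] K(1) that(1) dist_triangle[of x y a] by (fastforce simp: dist_commute)
  have H1: "\<forall>y\<in>K2. dist (T x) y \<le> \<rho>" if x: "x \<in> K1" and h: "\<forall>y\<in>K2. dist x y \<le> \<rho>" for x \<rho>
  proof -
    obtain y where y: "y \<in> K2" "dist (T x) y = D" using prox1[of "T x"] K(7) x by blast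
    have Dr: "D \<le> \<rho>" using KDle[OF x y(1)] h y(1) by fastforce
    have "adm A B T D K1 (K2 \<inter> cball (T x) \<rho>)" unfolding adm_def
    proof (intro conjI)
      show "K1 \<subseteq> A" "K2 \<inter> cball (T x) \<rho> \<subseteq> B" "closed K1" "gconvex K1" "T ` K1 \<subseteq> K1" using K by auto
      show "closed (K2 \<inter> cball (T x) \<rho>)" using K by auto
      show "gconvex (K2 \<inter> cball (T x) \<rho>)" using K gconvex_cball[OF bc] by (intro gconvex_Int) auto
      show "T ` (K2 \<inter> cball (T x) \<rho>) \<subseteq> K2 \<inter> cball (T x) \<rho>"
      proof
        fix z assume "z \<in> T ` (K2 \<inter> cball (T x) \<rho>)"
        then obtain w where w: "w \<in> K2" "z = T w" by blast
        have "dist (T x) (T w) \<le> \<rho>" using TK[OF x w(1)] h w(1) by fastforce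
        then show "z \<in> K2 \<inter> cball (T x) \<rho>" using w K(8) by auto
      qed
      have "T x \<in> K1" "y \<in> K2 \<inter> cball (T x) \<rho>" using y Dr K(7) x by auto
      then show "\<exists>u\<in>K1. \<exists>v\<in>K2 \<inter> cball (T x) \<rho>. dist u v = D" using y(2) by blast
    qed
    then have "K2 \<inter> cball (T x) \<rho> = K2" using minimal by blast
    then show ?thesis by auto
  qed
  have H2: "\<forall>x\<in>K1. dist x (T y) \<le> \<rho>" if y: "y \<in> K2" and h: "\<forall>x\<in>K1. dist x y \<le> \<rho>" for y \<rho>
  proof -
    obtain x where x: "x \<in> K1" "dist x (T y) = D" using prox2[of "T y"] K(8) y by blast
    have Dr: "D \<le> \<rho>" using KDle[OF x(1) y] h x(1) by fastforce
    have "adm A B T D (K1 \<inter> cball (T y) \<rho>) K2" unfolding adm_def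
    proof (intro conjI)
      show "K2 \<subseteq> B" "K1 \<inter> cball (T y) \<rho> \<subseteq> A" "closed K2" "gconvex K2" "T ` K2 \<subseteq> K2" using K by auto
      show "closed (K1 \<inter> cball (T y) \<rho>)" using K by auto
      show "gconvex (K1 \<inter> cball (T y) \<rho>)" using K gconvex_cball[OF bc] by (intro gconvex_Int) auto
      show "T ` (K1 \<inter> cball (T y) \<rho>) \<subseteq> K1 \<inter> cball (T y) \<rho>"
      proof
        fix z assume "z \<in> T ` (K1 \<inter> cball (T y) \<rho>)"
        then obtain w where w: "w \<in> K1" "z = T w" by blast
        have "dist (T w) (T y) \<le> \<rho>" using TK[OF w(1) y] h w(1) by fastforce
        then show "z \<in> K1 \<inter> cball (T y) \<rho>" using w K(7) by (auto simp: dist_commute)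
      qed
      have "T y \<in> K2" "x \<in> K1 \<inter> cball (T y) \<rho>" using x Dr K(8) y by (auto simp: dist_commute)
      then show "\<exists>u\<in>K1 \<inter> cball (T y) \<rho>. \<exists>v\<in>K2. dist u v = D" using x(2) by blast
    qed
    then have "K1 \<subseteq> cball (T y) \<rho>" using minimal by blast
    then show ?thesis by (auto simp: dist_commute)
  qed
  define X where "X = {dist x y | x y. x \<in> K1 \<and> y \<in> K2}"
  define \<Delta> where "\<Delta> = set_delta K1 K2"
  have Dset: "\<Delta> = Sup X" unfolding \<Delta>_def X_def set_delta_def ..
  have Xne: "X \<noteq> {}" using K1n K2n unfolding X_def by blast
  have Xbd: "bdd_above X" unfolding X_def by (rule bdd_aboveI[of _ "2*R + D"]) (use cross_bd in blast)
  have le\<Delta>: "dist x y \<le> \<Delta>" if "x \<in> K1" "y \<in> K2" for x y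
    unfolding Dset by (rule cSup_upper[OF _ Xbd]) (use that X_def in blast)
  have \<Delta>le: "\<Delta> \<le> \<rho>" if "\<forall>x\<in>K1. \<forall>y\<in>K2. dist x y \<le> \<rho>" for \<rho>
    unfolding Dset by (rule cSup_least[OF Xne]) (use that X_def in blast)
  have sdK: "set_dist K1 K2 = D" unfolding set_dist_def
  proof (rule cInf_eq_minimum)
    show "D \<in> {dist x y |x y. x \<in> K1 \<and> y \<in> K2}" using K(9) by fastforce
    show "D \<le> z" if "z \<in> {dist x y |x y. x \<in> K1 \<and> y \<in> K2}" for z using that KDle by blast
  qed
  have "\<Delta> \<le> D"
  proof (rule ccontr)
    assume "\<not> \<Delta> \<le> D"
    then have gt: "set_delta K1 K2 > set_dist K1 K2" using sdK \<Delta>_def by simp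
    have pp: "proximal_pair K1 K2" unfolding proximal_pair_def sdK
      using prox1 prox2 by blast
    have "\<exists>x1\<in>K1. \<exists>x2\<in>K2. pt_delta x1 K2 < set_delta K1 K2 \<and> pt_delta x2 K1 < set_delta K1 K2"
      using pns unfolding proximal_normal_structure_def
      using K1n K2n K(3,4) K1bd K2bd K(5,6) pp K(1,2) sdK Ddef gt by blast
    then obtain x1 x2 where x12: "x1 \<in> K1" "x2 \<in> K2" "pt_delta x1 K2 < \<Delta>" "pt_delta x2 K1 < \<Delta>"
      unfolding \<Delta>_def by blast
    define \<rho>0 where "\<rho>0 = max (pt_delta x1 K2) (pt_delta x2 K1)"
    define \<rho> where "\<rho> = (\<rho>0 + \<Delta>) / 2"
    have \<rho>0: "\<rho>0 < \<Delta>" using x12 unfolding \<rho>0_def by simp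
    have \<rho>: "\<rho> < \<Delta>" using \<rho>0 unfolding \<rho>_def by simp
    have px1: "dist x1 y \<le> \<rho>0" if "y \<in> K2" for y
    proof -
      have "dist x1 y \<le> pt_delta x1 K2" unfolding pt_delta_def
        by (rule cSup_upper) (use that cross_bd[OF x12(1)] in \<open>auto intro!: bdd_aboveI[of _ "2*R + D"]\<close>)
      then show ?thesis unfolding \<rho>0_def by simp
    qed
    have px2: "dist x x2 \<le> \<rho>0" if "x \<in> K1" for x
    proof -
      have "dist x2 x \<le> pt_delta x2 K1" unfolding pt_delta_def
        by (rule cSup_upper) (use that cross_bd[OF _ x12(2)] in \<open>auto intro!: bdd_aboveI[of _ "2*R + D"] simp: dist_commute\<close>)
      then show ?thesis unfolding \<rho>0_def by (simp add: dist_commute)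
    qed
    obtain x2' where x2': "x2' \<in> K2" "dist x1 x2' = D" using prox1[OF x12(1)] by blast
    obtain x1' where x1': "x1' \<in> K1" "dist x1' x2 = D" using prox2[OF x12(2)] by blast
    obtain c1 where c1: "geodesic_seg c1 (dist x1 x1') x1 x1'" using geo_ex[OF gs] by blast
    obtain c2 where c2: "geodesic_seg c2 (dist x2' x2) x2' x2" using geo_ex[OF gs] by blast
    have half: "(1/2::real) \<in> {0..1}" by simp
    define u where "u = c1 ((1/2) * dist x1 x1')"
    define v where "v = c2 ((1/2) * dist x2' x2)"
    have uK: "u \<in> K1" unfolding u_def by (rule gconvexD[OF K(5) x12(1) x1'(1) c1]) simp
    have vK: "v \<in> K2" unfolding v_def by (rule gconvexD[OF K(6) x2'(1) x12(2) c2]) simp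
    have "dist u v \<le> (1 - 1/2) * dist x1 x2' + (1/2) * dist x1' x2"
      unfolding u_def v_def by (rule bus[OF bc c1 c2 half])
    then have "dist u v \<le> D" using x1' x2' by simp
    then have uv: "dist u v = D" using KDle[OF uK vK] by simp
    have uy: "dist u y \<le> \<rho>" if "y \<in> K2" for y
    proof -
      have "dist u y \<le> (1 - 1/2) * dist x1 y + (1/2) * dist x1' y"
        unfolding u_def by (rule bus_pt[OF bc c1 half])
      then show ?thesis using px1[OF that] le\<Delta>[OF x1'(1) that] unfolding \<rho>_def by simp
    qed
    have xv: "dist x v \<le> \<rho>" if "x \<in> K1" for x
    proof -
      have "dist v x \<le> (1 - 1/2) * dist x2' x + (1/2) * dist x2 x"
        unfolding v_def by (rule bus_pt[OF bc c2 half])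
      then show ?thesis using px2[OF that] le\<Delta>[OF that x2'(1)] unfolding \<rho>_def by (simp add: dist_commute)
    qed
    define L1 where "L1 = K1 \<inter> (\<Inter>y\<in>K2. cball y \<rho>)"
    define L2 where "L2 = K2 \<inter> (\<Inter>x\<in>K1. cball x \<rho>)"
    have "adm A B T D L1 L2" unfolding adm_def
    proof (intro conjI)
      show "L1 \<subseteq> A" "L2 \<subseteq> B" unfolding L1_def L2_def using K by auto
      show "closed L1" unfolding L1_def using K(3) by (intro closed_Int closed_INT) auto
      show "closed L2" unfolding L2_def using K(4) by (intro closed_Int closed_INT) auto
      show "gconvex L1" unfolding L1_def using K(5) gconvex_cball[OF bc] by (intro gconvex_Int gconvex_Inter) auto
      show "gconvex L2" unfolding L2_def using K(6) gconvex_cball[OF bc] by (intro gconvex_Int gconvex_Inter) auto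
      show "T ` L1 \<subseteq> L1"
      proof
        fix z assume "z \<in> T ` L1"
        then obtain x where x: "x \<in> L1" "z = T x" by blast
        have "\<forall>y\<in>K2. dist x y \<le> \<rho>" using x(1) unfolding L1_def by (auto simp: dist_commute)
        then have "\<forall>y\<in>K2. dist (T x) y \<le> \<rho>" using H1 x(1) unfolding L1_def by blast
        then show "z \<in> L1" using x K(7) unfolding L1_def by (auto simp: dist_commute)
      qed
      show "T ` L2 \<subseteq> L2"
      proof
        fix z assume "z \<in> T ` L2"
        then obtain y where y: "y \<in> L2" "z = T y" by blast
        have "\<forall>x\<in>K1. dist x y \<le> \<rho>" using y(1) unfolding L2_def by (auto simp: dist_commute)
        then have "\<forall>x\<in>K1. dist x (T y) \<le> \<rho>" using H2 y(1) unfolding L2_def by blast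
        then show "z \<in> L2" using y K(8) unfolding L2_def by auto
      qed
      have "u \<in> L1" unfolding L1_def using uK uy by (auto simp: dist_commute)
      moreover have "v \<in> L2" unfolding L2_def using vK xv by auto
      ultimately show "\<exists>x\<in>L1. \<exists>y\<in>L2. dist x y = D" using uv by blast
    qed
    then have "L1 = K1" using minimal[of L1 L2] unfolding L1_def L2_def by auto
    then have sub: "K1 \<subseteq> (\<Inter>y\<in>K2. cball y \<rho>)" unfolding L1_def by blast
    have "\<forall>x\<in>K1. \<forall>y\<in>K2. dist x y \<le> \<rho>"
    proof (intro ballI)
      fix x y assume "x \<in> K1" "y \<in> K2"
      then have "x \<in> cball y \<rho>" using sub by blast
      then show "dist x y \<le> \<rho>" by (simp add: dist_commute)
    qed
    then have "\<Delta> \<le> \<rho>" by (rule \<Delta>le)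
    then show False using \<rho> by simp
  qed
  then have eqD: "dist x y = D" if "x \<in> K1" "y \<in> K2" for x y
    using le\<Delta>[OF that] KDle[OF that] by simp
  have single1: "x = x'" if "x \<in> K1" "x' \<in> K1" for x x'
  proof -
    obtain y where y: "y \<in> K2" using K2n by blast
    obtain c where c: "geodesic_seg c (dist x x') x x'" using geo_ex[OF gs] by blast
    have "\<forall>t\<in>{0..dist x x'}. dist (c t) y = D"
      using eqD gconvexD[OF K(5) that c] y by blast
    then show ?thesis by (rule sphere_strict[OF bc gs c])
  qed
  have single2: "y = y'" if "y \<in> K2" "y' \<in> K2" for y y'
  proof -
    obtain x where x: "x \<in> K1" using K1n by blast
    obtain c where c: "geodesic_seg c (dist y y') y y'" using geo_ex[OF gs] by blast
    have "\<forall>t\<in>{0..dist y y'}. dist (c t) x = D"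
      using eqD gconvexD[OF K(6) that c] x by (simp add: dist_commute)
    then show ?thesis by (rule sphere_strict[OF bc gs c])
  qed
  obtain x y where xy: "x \<in> K1" "y \<in> K2" using K1n K2n by blast
  have "T x = x" using single1[of "T x" x] K(7) xy by blast
  moreover have "T y = y" using single2[of "T y" y] K(8) xy by blast
  ultimately show ?thesis using eqD[OF xy] xy K(1,2) by blast
qed



theorem mainTheorem3:
  fixes A B :: "'a::metric_space set" and T :: "'a \<Rightarrow> 'a"
  assumes "reflexive_space TYPE('a)" and "busemann_convex TYPE('a)"
    and "geodesic_space TYPE('a)"
    and "A \<noteq> {}" "B \<noteq> {}" "closed A" "closed B" "gconvex A" "gconvex B" "bounded A"
    and "T ` A \<subseteq> A" "T ` B \<subseteq> B"
    and "\<forall>x\<in>A. \<forall>y\<in>B. dist (T x) (T y) \<le> dist x y"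
    and "proximal_normal_structure A B"
  shows "\<exists>x\<in>A. \<exists>y\<in>B. T x = x \<and> T y = y \<and> dist x y = set_dist A B"
proof -
  note rf = assms(1) and bc = assms(2) and gs = assms(3)
  note An = assms(4) and Bn = assms(5) and Acl = assms(6) and Bcl = assms(7)
  note Acv = assms(8) and Bcv = assms(9) and Abd = assms(10)
  note TA = assms(11) and TB = assms(12) and Tne = assms(13) and pns = assms(14)
  define D where "D = set_dist A B"
  have Dset: "D = Inf {dist x y | x y. x \<in> A \<and> y \<in> B}" unfolding D_def set_dist_def ..
  have bb: "bdd_below {dist x y | x y. x \<in> A \<and> y \<in> B}" by (rule bdd_belowI[of _ 0]) auto
  have Dle: "D \<le> dist x y" if "x \<in> A" "y \<in> B" for x y
    unfolding Dset by (rule cInf_lower[OF _ bb]) (use that in auto)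
  have Dlt: "\<exists>x\<in>A. \<exists>y\<in>B. dist x y < D + e" if "0 < e" for e
  proof -
    have lt: "Inf {dist x y | x y. x \<in> A \<and> y \<in> B} < D + e" using that Dset by simp
    have ne: "{dist x y | x y. x \<in> A \<and> y \<in> B} \<noteq> {}" using An Bn by blast
    obtain z where z: "z \<in> {dist x y | x y. x \<in> A \<and> y \<in> B}" "z < D + e"
      using cInf_lessD[OF ne lt] by (elim bexE)
    from z(1) obtain x y where "x \<in> A" "y \<in> B" "z = dist x y" by blast
    then show ?thesis using z(2) by blast
  qed
  have start: "\<exists>x0\<in>A. \<exists>y0\<in>B. dist x0 y0 = D"
  proof -
    define S where "S n = {x\<in>A. infdist x B \<le> D + 1/Suc n}" for n
    have "\<exists>x. \<forall>n. x \<in> S n"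
    proof (rule refl_seq[OF rf])
      fix n
      have "D + 1/Suc (Suc n) \<le> D + 1/Suc n" by (simp add: frac_le)
      then show "S (Suc n) \<subseteq> S n" unfolding S_def by auto
      obtain x y where "x \<in> A" "y \<in> B" "dist x y < D + 1/Suc n" using Dlt[of "1/Suc n"] by auto
      then have "x \<in> S n" unfolding S_def using infdist_le[of y B x] by auto
      then show "S n \<noteq> {}" by blast
      show "closed (S n)" unfolding S_def by (rule closed_sublevel[OF Acl])
      show "gconvex (S n)" unfolding S_def by (rule gconvex_sublevel[OF bc gs Acv Bcv Bn])
      show "bounded (S n)" unfolding S_def by (rule bounded_subset[OF Abd]) auto
    qed
    then obtain x where x: "\<forall>n. x \<in> S n" by blast
    have xA: "x \<in> A" using x S_def by auto
    have "infdist x B \<le> D"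
    proof (rule field_le_epsilon)
      fix e :: real assume e: "0 < e"
      obtain n where n: "1/Suc n < e" using e by (metis nat_approx_posE)
      have "infdist x B \<le> D + 1/Suc n" using x[rule_format, of n] unfolding S_def by auto
      then show "infdist x B \<le> D + e" using n by simp
    qed
    then obtain y where y: "y \<in> B" "dist x y \<le> D" using attain[OF rf bc Bcl Bcv Bn] by blast
    then have "dist x y = D" using Dle[OF xA y(1)] by linarith
    then show ?thesis using xA y(1) by blast
  qed
  have AB: "adm A B T D A B" unfolding adm_def using Acl Bcl Acv Bcv TA TB start by (intro conjI subset_refl)
  obtain K1 K2 where Kadm: "adm A B T D K1 K2"
    and minimal: "\<And>E F. adm A B T D E F \<Longrightarrow> E \<subseteq> K1 \<Longrightarrow> F \<subseteq> K2 \<Longrightarrow> E = K1 \<and> F = K2"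
    using zorn_min[OF rf bc gs Abd Dle AB] by blast
  have "\<exists>x\<in>A. \<exists>y\<in>B. T x = x \<and> T y = y \<and> dist x y = D"
    by (rule final_step[OF rf bc gs Abd Tne pns D_def Dle Kadm minimal])
  then show ?thesis unfolding D_def .
qed

end
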